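(* In the $\ell^1$ linear social choice setting, random dictatorship $f_{\mathrm{RD}}$ satisfies $\mathrm{D}(f_{\mathrm{RD}})=\Omega(d)$ and $\mathrm{D}(f_{\mathrm{RD}})=O(d^3)$.
   Context: Setting ($\ell^1$ linear social choice). Fix a dimension $d\ge 1$ and let $\Delta_d=\{x\in\mathbb{R}^d_{\ge 0}:\sum_i x^i=1\}$. An instance consists of a finite set $V$ of $n$ voters and a finite set $C$ of $m$ candidates, each a vector in $\Delta_d$, with every voter vector in $\mathrm{Cone}(C)$ (nonnegative linear combinations of candidate vectors). Utility: $u_v(c)=v^\top c$. Each voter reports a ranking of $C$ consistent with its utilities (ties broken arbitrarily). $\mathrm{UW}(c)=\sum_{v\in V}u_v(c)$. A randomized voting rule outputs a distribution over $C$ from the profile only. Distortion on an instance: $\max_c\mathrm{UW}(c)/\mathbb{E}_{c\sim f}[\mathrm{UW}(c)]$; $\mathrm{D}(f)$ is the supremum over all instances, as a function of $d$. Random dictatorship $f_{\mathrm{RD}}$: pick a voter uniformly at random and output that voter's top-ranked candidate. *)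

theory Defs
  imports "HOL-Probability.Probability"
begin

text \<open>Vectors in R^d are represented as functions nat => real; only coordinates i < d
  are meaningful, and points of the in_simplex are required to vanish outside {0..<d}
  so that the representation is canonical.\<close>

definition in_simplex :: "nat \<Rightarrow> (nat \<Rightarrow> real) \<Rightarrow> bool" where
  "in_simplex d x \<longleftrightarrow> (\<forall>i<d. 0 \<le> x i) \<and> (\<forall>i\<ge>d. x i = 0) \<and> (\<Sum>i<d. x i) = 1"

definition ip :: "nat \<Rightarrow> (nat \<Rightarrow> real) \<Rightarrow> (nat \<Rightarrow> real) \<Rightarrow> real" where
  "ip d x y = (\<Sum>i<d. x i * y i)"

definition in_cone :: "nat \<Rightarrow> (nat \<Rightarrow> real) set \<Rightarrow> (nat \<Rightarrow> real) \<Rightarrow> bool" where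
  "in_cone d C v \<longleftrightarrow> (\<exists>l. (\<forall>c\<in>C. 0 \<le> l c) \<and> (\<forall>i<d. v i = (\<Sum>c\<in>C. l c * c i)))"

definition consistent_ranking ::
  "nat \<Rightarrow> (nat \<Rightarrow> real) \<Rightarrow> (nat \<Rightarrow> real) set \<Rightarrow> (nat \<Rightarrow> real) list \<Rightarrow> bool" where
  "consistent_ranking d v C r \<longleftrightarrow>
     distinct r \<and> set r = C \<and> sorted_wrt (\<lambda>a b. ip d v b \<le> ip d v a) r"

definition valid_instance ::
  "nat \<Rightarrow> nat set \<Rightarrow> (nat \<Rightarrow> nat \<Rightarrow> real) \<Rightarrow> (nat \<Rightarrow> real) set
     \<Rightarrow> (nat \<Rightarrow> (nat \<Rightarrow> real) list) \<Rightarrow> bool" where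
  "valid_instance d V vote C rk \<longleftrightarrow>
     finite V \<and> V \<noteq> {} \<and> finite C \<and> C \<noteq> {} \<and> (\<forall>c\<in>C. in_simplex d c) \<and>
     (\<forall>v\<in>V. in_simplex d (vote v) \<and> in_cone d C (vote v) \<and>
              consistent_ranking d (vote v) C (rk v))"

definition UW :: "nat \<Rightarrow> nat set \<Rightarrow> (nat \<Rightarrow> nat \<Rightarrow> real) \<Rightarrow> (nat \<Rightarrow> real) \<Rightarrow> real" where
  "UW d V vote c = (\<Sum>v\<in>V. ip d (vote v) c)"

definition f_RD :: "nat set \<Rightarrow> (nat \<Rightarrow> (nat \<Rightarrow> real) list) \<Rightarrow> (nat \<Rightarrow> real) pmf" where
  "f_RD V rk = map_pmf (\<lambda>v. hd (rk v)) (pmf_of_set V)"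

definition distortion ::
  "nat \<Rightarrow> nat set \<Rightarrow> (nat \<Rightarrow> nat \<Rightarrow> real) \<Rightarrow> (nat \<Rightarrow> real) set \<Rightarrow> (nat \<Rightarrow> real) pmf \<Rightarrow> real" where
  "distortion d V vote C p =
     (MAX c\<in>C. UW d V vote c) / measure_pmf.expectation p (UW d V vote)"

definition D_RD :: "nat \<Rightarrow> ereal" where
  "D_RD d = (SUP I \<in> {(V, vote, C, rk). valid_instance d V vote C rk}.
               (case I of (V, vote, C, rk) \<Rightarrow> ereal (distortion d V vote C (f_RD V rk))))"

end

theory Submission imports Defs begin
lemma cs_sum:
  fixes a :: "'a \<Rightarrow> real"
  assumes "finite A"
  shows "(\<Sum>k\<in>A. a k)^2 \<le> real (card A) * (\<Sum>k\<in>A. (a k)^2)"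
proof -
  have "0 \<le> (\<Sum>k\<in>A. \<Sum>l\<in>A. (a k - a l)^2)" by (intro sum_nonneg) auto
  also have "\<dots> = (\<Sum>k\<in>A. \<Sum>l\<in>A. (a k)^2 + (a l)^2 - 2 * a k * a l)"
    by (simp add: power2_diff)
  also have "\<dots> = (\<Sum>k\<in>A. \<Sum>l\<in>A. (a k)^2) + (\<Sum>k\<in>A. \<Sum>l\<in>A. (a l)^2) - 2 * (\<Sum>k\<in>A. \<Sum>l\<in>A. a k * a l)"
    by (simp add: sum.distrib sum_subtractf sum_distrib_left mult.assoc)
  also have "(\<Sum>k\<in>A. \<Sum>l\<in>A. a k * a l) = (\<Sum>k\<in>A. a k)^2"
    by (simp add: power2_eq_square sum_product)
  also have "(\<Sum>k\<in>A. \<Sum>l\<in>A. (a k)^2) = real (card A) * (\<Sum>k\<in>A. (a k)^2)"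
    by (simp add: sum_distrib_left mult.commute)
  also have "(\<Sum>k\<in>A. \<Sum>l\<in>A. (a l)^2) = real (card A) * (\<Sum>k\<in>A. (a k)^2)"
    by simp
  finally show ?thesis by simp
qed

lemma ip_unit: "k < d \<Longrightarrow> ip d x (\<lambda>i. if i = k then 1 else 0) = x k"
  unfolding ip_def by (simp add: if_distrib cong: if_cong)

lemma hd_best:
  assumes "consistent_ranking d v C r" "C \<noteq> {}" "c \<in> C"
  shows "hd r \<in> C \<and> ip d v c \<le> ip d v (hd r)"
proof -
  from assms have r: "set r = C" "sorted_wrt (\<lambda>a b. ip d v b \<le> ip d v a) r"
    unfolding consistent_ranking_def by auto
  then obtain x xs where rx: "r = x # xs" using assms(2) by (cases r) auto
  show ?thesis using r rx assms(3) by auto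
qed

lemma ranking_exists:
  assumes "finite C" "t \<in> C" "\<And>c. c \<in> C \<Longrightarrow> ip d v c \<le> ip d v t"
  shows "\<exists>r. consistent_ranking d v C r \<and> hd r = t"
proof -
  obtain xs where xs: "set xs = C - {t}" "distinct xs"
    using finite_distinct_list[of "C - {t}"] assms(1) by auto
  define r where "r = t # sort_key (\<lambda>c. - ip d v c) xs"
  have s: "sorted_wrt (\<lambda>a b. - ip d v a \<le> - ip d v b) (sort_key (\<lambda>c. - ip d v c) xs)"
    using sorted_sort_key[of "\<lambda>c. - ip d v c" xs] by (simp add: sorted_map)
  have "consistent_ranking d v C r"
    unfolding consistent_ranking_def r_def using xs assms s by auto
  then show ?thesis unfolding r_def by auto
qed


lemma voter_lb:
  assumes fin: "finite C" and cs: "\<forall>c\<in>C. in_simplex d c" and xs: "in_simplex d x"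
    and xc: "in_cone d C x" and best: "\<And>c. c \<in> C \<Longrightarrow> ip d x c \<le> ip d x t"
  shows "1 / real d \<le> ip d x t"
proof -
  obtain l where l0: "\<forall>c\<in>C. 0 \<le> l c" and lx: "\<forall>i<d. x i = (\<Sum>c\<in>C. l c * c i)"
    using xc unfolding in_cone_def by auto
  have x1: "(\<Sum>i<d. x i) = 1" using xs unfolding in_simplex_def by auto
  have dpos: "d > 0" using x1 by (cases d) auto
  have "ip d x x = (\<Sum>i<d. x i * (\<Sum>c\<in>C. l c * c i))"
    unfolding ip_def using lx by (intro sum.cong) auto
  also have "\<dots> = (\<Sum>c\<in>C. l c * ip d x c)"
    unfolding ip_def by (simp add: sum_distrib_left sum_distrib_right mult_ac sum.swap[of _ C])
  also have "\<dots> \<le> (\<Sum>c\<in>C. l c * ip d x t)"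
    using l0 best by (intro sum_mono mult_left_mono) auto
  also have "\<dots> = (\<Sum>c\<in>C. l c) * ip d x t" by (simp add: sum_distrib_right)
  also have "(\<Sum>c\<in>C. l c) = 1"
  proof -
    have "(\<Sum>c\<in>C. l c) = (\<Sum>c\<in>C. l c * (\<Sum>i<d. c i))"
      using cs unfolding in_simplex_def by (intro sum.cong) auto
    also have "\<dots> = (\<Sum>i<d. \<Sum>c\<in>C. l c * c i)"
      by (simp add: sum_distrib_left sum.swap[of _ C])
    also have "\<dots> = (\<Sum>i<d. x i)" using lx by (intro sum.cong) auto
    finally show ?thesis using x1 by simp
  qed
  finally have h1: "ip d x x \<le> ip d x t" by simp
  have "1 = (\<Sum>i<d. x i)^2" using x1 by simp
  also have "\<dots> \<le> real d * (\<Sum>i<d. (x i)^2)" using cs_sum[of "{..<d}" x] by simp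
  also have "(\<Sum>i<d. (x i)^2) = ip d x x" unfolding ip_def by (simp add: power2_eq_square)
  finally have "1 \<le> real d * ip d x x" .
  then have "1 / real d \<le> ip d x x" using dpos by (simp add: field_simps)
  then show ?thesis using h1 by simp
qed


lemma ub_inst:
  assumes vi: "valid_instance d V vote C rk"
  shows "distortion d V vote C (f_RD V rk) \<le> real d ^ 2"
proof -
  define t where "t v = hd (rk v)" for v
  have fV: "finite V" "V \<noteq> {}" and fC: "finite C" "C \<noteq> {}"
    and cs: "\<forall>c\<in>C. in_simplex d c"
    and vs: "\<And>v. v \<in> V \<Longrightarrow> in_simplex d (vote v) \<and> in_cone d C (vote v) \<and>
              consistent_ranking d (vote v) C (rk v)"
    using vi unfolding valid_instance_def by auto
  have tC: "t v \<in> C" and best: "ip d (vote v) c \<le> ip d (vote v) (t v)" if "v \<in> V" "c \<in> C" for v c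
    using hd_best[of d "vote v" C "rk v" c] vs[OF that(1)] that fC unfolding t_def by auto
  have tC': "t v \<in> C" if "v \<in> V" for v
    using tC[OF that] fC by auto
  obtain c0 where "c0 \<in> C" using fC by auto
  then have "(\<Sum>i<d. c0 i) = 1" using cs unfolding in_simplex_def by auto
  then have dpos: "d > 0" by (cases d) auto
  define n where "n = real (card V)"
  have npos: "n > 0" using fV unfolding n_def by (simp add: card_gt_0_iff)
  define S where "S k = (\<Sum>v\<in>V. vote v k)" for k
  define T where "T k = (\<Sum>v\<in>V. t v k)" for k
  define a where "a k = (\<Sum>v\<in>V. vote v k * t v k)" for k
  define W where "W = (\<Sum>k<d. a k)"
  define E where "E = measure_pmf.expectation (f_RD V rk) (UW d V vote)"
  have vnn: "0 \<le> vote v k" if "v \<in> V" "k < d" for v k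
    using vs[OF that(1)] that(2) unfolding in_simplex_def by auto
  have tnn: "0 \<le> t v k" if "v \<in> V" "k < d" for v k
    using tC'[OF that(1)] cs that(2) unfolding in_simplex_def by auto
  have tle1: "t v k \<le> 1" if "v \<in> V" "k < d" for v k
  proof -
    have "t v k \<le> (\<Sum>i<d. t v i)"
      using tnn[OF that(1)] that(2) by (intro member_le_sum) auto
    also have "\<dots> = 1" using tC'[OF that(1)] cs unfolding in_simplex_def by auto
    finally show ?thesis .
  qed
  have vle1: "vote v k \<le> 1" if "v \<in> V" "k < d" for v k
  proof -
    have "vote v k \<le> (\<Sum>i<d. vote v i)"
      using vnn[OF that(1)] that(2) by (intro member_le_sum) auto
    also have "\<dots> = 1" using vs[OF that(1)] unfolding in_simplex_def by auto
    finally show ?thesis .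
  qed
  have hE: "E = (\<Sum>v\<in>V. UW d V vote (t v)) / n"
    unfolding E_def f_RD_def n_def t_def using fV by (simp add: integral_pmf_of_set)
  have hsum: "(\<Sum>v\<in>V. UW d V vote (t v)) = (\<Sum>k<d. S k * T k)"
  proof -
    have "(\<Sum>v\<in>V. UW d V vote (t v)) = (\<Sum>v\<in>V. \<Sum>w\<in>V. \<Sum>k<d. vote w k * t v k)"
      unfolding UW_def ip_def by simp
    also have "\<dots> = (\<Sum>k<d. \<Sum>w\<in>V. \<Sum>v\<in>V. vote w k * t v k)"
    proof -
      have "(\<Sum>v\<in>V. \<Sum>w\<in>V. \<Sum>k<d. vote w k * t v k) = (\<Sum>v\<in>V. \<Sum>k<d. \<Sum>w\<in>V. vote w k * t v k)"
        by (rule sum.cong[OF refl], rule sum.swap)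
      also have "\<dots> = (\<Sum>k<d. \<Sum>v\<in>V. \<Sum>w\<in>V. vote w k * t v k)"
        by (rule sum.swap)
      also have "\<dots> = (\<Sum>k<d. \<Sum>w\<in>V. \<Sum>v\<in>V. vote w k * t v k)"
        by (rule sum.cong[OF refl], rule sum.swap)
      finally show ?thesis .
    qed
    also have "\<dots> = (\<Sum>k<d. S k * T k)"
      unfolding S_def T_def by (simp add: sum_product)
    finally show ?thesis .
  qed
  have ha: "(a k)^2 \<le> S k * T k" if "k < d" for k
  proof -
    have a0: "0 \<le> a k" unfolding a_def using vnn tnn that by (intro sum_nonneg) auto
    have aS: "a k \<le> S k" unfolding a_def S_def
      using vnn tnn tle1 that by (intro sum_mono) (simp add: mult_left_le)
    have aT: "a k \<le> T k" unfolding a_def T_def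
      using vnn tnn vle1 that by (intro sum_mono mult_left_le_one_le) auto
    show ?thesis using a0 aS aT by (simp add: power2_eq_square mult_mono)
  qed
  have hW: "W = (\<Sum>v\<in>V. ip d (vote v) (t v))"
    unfolding W_def a_def ip_def by (simp add: sum.swap[of _ V])
  have hW1: "n / real d \<le> W"
  proof -
    have "(\<Sum>v\<in>V. 1 / real d) \<le> (\<Sum>v\<in>V. ip d (vote v) (t v))"
    proof (rule sum_mono)
      fix v assume v: "v \<in> V"
      show "1 / real d \<le> ip d (vote v) (t v)"
        using voter_lb[OF fC(1) cs _ _ best[OF v]] vs[OF v] by blast
    qed
    then show ?thesis using hW unfolding n_def by simp
  qed
  obtain cs0 where cs0: "cs0 \<in> C" "(MAX c\<in>C. UW d V vote c) = UW d V vote cs0"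
  proof -
    have "(MAX c\<in>C. UW d V vote c) \<in> UW d V vote ` C" using fC by (intro Max_in) auto
    then show ?thesis using that by auto
  qed
  have hOpt: "(MAX c\<in>C. UW d V vote c) \<le> W"
  proof -
    have "UW d V vote cs0 \<le> W"
      unfolding hW UW_def using best cs0(1) by (intro sum_mono) auto
    then show ?thesis using cs0(2) by simp
  qed
  have CS: "W^2 \<le> real d * (\<Sum>k<d. (a k)^2)"
    unfolding W_def using cs_sum[of "{..<d}" a] by simp
  also have "\<dots> \<le> real d * (\<Sum>k<d. S k * T k)"
    using ha by (intro mult_left_mono sum_mono) auto
  also have "\<dots> = real d * n * E" using hE hsum npos by simp
  finally have hWE: "W^2 \<le> real d * n * E" .
  have "n / real d > 0" using npos dpos by simp
  then have Wpos: "W > 0" using hW1 by linarith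
  have "0 < W^2" using Wpos by simp
  then have "0 < real d * n * E" using hWE by linarith
  moreover have "real d * n > 0" using dpos npos by simp
  ultimately have Epos: "E > 0" by (simp add: zero_less_mult_iff)
  have "n \<le> real d * W" using hW1 dpos by (simp add: field_simps)
  then have "n * W \<le> real d * W * W" using Wpos by (simp add: mult_right_mono)
  also have "\<dots> = W^2 * real d" by (simp add: power2_eq_square)
  also have "\<dots> \<le> real d * n * E * real d" using hWE by (simp add: mult_right_mono)
  finally have "n * W \<le> n * (real d ^ 2 * E)" by (simp add: power2_eq_square mult_ac)
  then have "W \<le> real d ^ 2 * E" using npos by simp
  then have "(MAX c\<in>C. UW d V vote c) \<le> real d ^ 2 * E" using hOpt by simp
  then show ?thesis unfolding distortion_def E_def[symmetric] using Epos by (simp add: divide_le_eq)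
qed


definition ev :: "nat \<Rightarrow> nat \<Rightarrow> real" where "ev k = (\<lambda>i. if i = k then 1 else 0)"

lemma sum_ind: "k < (d::nat) \<Longrightarrow> (\<Sum>i<d. f i * (if k = i then 1 else 0)) = (f k :: real)"
  by (simp add: if_distrib cong: if_cong)

lemma lb_inst:
  assumes d2: "d \<ge> 2"
  shows "ereal (real d / 2) \<le> D_RD d"
proof -
  define C where "C = ev ` {..<d}"
  define V where "V = {1..<d}"
  define vote where "vote j = (\<lambda>i. (ev 0 i + ev j i) / 2)" for j
  have ipv: "ip d x (ev k) = x k" if "k < d" for x k
    unfolding ev_def using ip_unit[OF that] by simp
  have evs: "in_simplex d (ev k)" if "k < d" for k
    using that unfolding in_simplex_def ev_def by auto
  have votes: "in_simplex d (vote j)" if "j \<in> V" for j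
  proof -
    have "(\<Sum>i<d. vote j i) = ((\<Sum>i<d. ev 0 i) + (\<Sum>i<d. ev j i)) / 2"
      unfolding vote_def by (simp add: sum.distrib sum_divide_distrib[symmetric])
    also have "\<dots> = 1" using that d2 unfolding V_def ev_def by auto
    finally show ?thesis unfolding in_simplex_def using that unfolding V_def vote_def ev_def by auto
  qed
  have inj: "inj_on ev {..<d}"
  proof (rule inj_onI)
    fix x y assume "ev x = ev y"
    then have "ev x x = ev y x" by simp
    then show "x = y" unfolding ev_def by (auto split: if_splits)
  qed
  have cone: "in_cone d C (vote j)" if "j \<in> V" for j
    unfolding in_cone_def
  proof (intro exI[of _ "\<lambda>c. (c 0 + c j) / 2"] conjI allI impI ballI)
    fix c assume "c \<in> C" then show "0 \<le> (c 0 + c j) / 2" unfolding C_def ev_def by auto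
  next
    fix i assume i: "i < d"
    have "(\<Sum>c\<in>C. (c 0 + c j) / 2 * c i) = (\<Sum>k<d. (ev k 0 + ev k j) / 2 * ev k i)"
      unfolding C_def by (simp add: sum.reindex[OF inj])
    also have "\<dots> = (ev i 0 + ev i j) / 2"
      using sum_ind[OF i, of "\<lambda>k. (ev k 0 + ev k j) / 2"] unfolding ev_def by simp
    also have "\<dots> = vote j i" unfolding vote_def ev_def by auto
    finally show "vote j i = (\<Sum>c\<in>C. (c 0 + c j) / 2 * c i)" by simp
  qed
  have rex: "\<exists>r. consistent_ranking d (vote j) C r \<and> hd r = ev j" if "j \<in> V" for j
  proof (rule ranking_exists)
    show "finite C" unfolding C_def by simp
    show "ev j \<in> C" using that unfolding C_def V_def by auto
    fix c assume "c \<in> C"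
    then obtain k where k: "k < d" "c = ev k" unfolding C_def by auto
    have jd: "j < d" "j \<noteq> 0" using that unfolding V_def by auto
    have "ip d (vote j) c = vote j k" using k ipv by simp
    moreover have "ip d (vote j) (ev j) = vote j j" using jd ipv by simp
    moreover have "vote j k \<le> vote j j" using jd unfolding vote_def ev_def by auto
    ultimately show "ip d (vote j) c \<le> ip d (vote j) (ev j)" by simp
  qed
  define rk where "rk j = (SOME r. consistent_ranking d (vote j) C r \<and> hd r = ev j)" for j
  have rk: "consistent_ranking d (vote j) C (rk j) \<and> hd (rk j) = ev j" if "j \<in> V" for j
    unfolding rk_def using someI_ex[OF rex[OF that]] .
  have vi: "valid_instance d V vote C rk"
  proof -
    have "ev 0 \<in> C" using d2 unfolding C_def by auto
    then have "C \<noteq> {}" by auto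
    moreover have "V \<noteq> {}" using d2 unfolding V_def by auto
    moreover have "\<forall>c\<in>C. in_simplex d c" using evs unfolding C_def by auto
    moreover have "finite V" "finite C" unfolding V_def C_def by auto
    ultimately show ?thesis unfolding valid_instance_def using votes cone rk by blast
  qed
  have UW0: "UW d V vote (ev 0) = real (d - 1) / 2"
  proof -
    have "UW d V vote (ev 0) = (\<Sum>j\<in>V. 1/2)"
      unfolding UW_def using d2 by (intro sum.cong refl) (simp add: ipv, simp add: vote_def ev_def V_def)
    then show ?thesis unfolding V_def by simp
  qed
  have UWj: "UW d V vote (ev j) = 1 / 2" if "j \<in> V" for j
  proof -
    have jd: "j < d" "j \<noteq> 0" using that unfolding V_def by auto
    have "UW d V vote (ev j) = (\<Sum>j'\<in>V. if j' = j then 1/2 else 0)"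
      unfolding UW_def using jd by (intro sum.cong refl) (simp add: ipv, simp add: vote_def ev_def V_def)
    then show ?thesis using that unfolding V_def by simp
  qed
  have fV: "finite V" "V \<noteq> {}" using d2 unfolding V_def by auto
  have E: "measure_pmf.expectation (f_RD V rk) (UW d V vote) = 1 / 2"
  proof -
    have "measure_pmf.expectation (f_RD V rk) (UW d V vote) = (\<Sum>j\<in>V. UW d V vote (hd (rk j))) / real (card V)"
      unfolding f_RD_def using fV by (simp add: integral_pmf_of_set)
    also have "(\<Sum>j\<in>V. UW d V vote (hd (rk j))) = (\<Sum>j\<in>V. 1 / 2)"
      using rk UWj by (intro sum.cong) auto
    finally show ?thesis using fV by simp
  qed
  have "UW d V vote (ev 0) \<le> (MAX c\<in>C. UW d V vote c)"
    using d2 unfolding C_def by (intro Max_ge) auto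
  then have "real (d - 1) \<le> distortion d V vote C (f_RD V rk)"
    unfolding distortion_def E UW0 by simp
  moreover have "real d / 2 \<le> real (d - 1)" using d2 by simp
  ultimately have "real d / 2 \<le> distortion d V vote C (f_RD V rk)" by linarith
  moreover have "ereal (distortion d V vote C (f_RD V rk)) \<le> D_RD d"
    unfolding D_RD_def using vi by (intro SUP_upper2[of "(V, vote, C, rk)"]) auto
  ultimately show ?thesis by (meson ereal_less_eq(3) order_trans)
qed

theorem theorem7:
  shows "(\<exists>c1>0. \<exists>N. \<forall>d\<ge>N. ereal (c1 * real d) \<le> D_RD d) \<and>
         (\<exists>c2>0. \<exists>N. \<forall>d\<ge>N. D_RD d \<le> ereal (c2 * real d ^ 3))"
proof (intro conjI)
  show "\<exists>c1>0. \<exists>N. \<forall>d\<ge>N. ereal (c1 * real d) \<le> D_RD d"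
    using lb_inst by (intro exI[of _ "1/2"] conjI exI[of _ 2]) auto
  show "\<exists>c2>0. \<exists>N. \<forall>d\<ge>N. D_RD d \<le> ereal (c2 * real d ^ 3)"
  proof (intro exI[of _ 1] conjI exI[of _ 1] allI impI)
    show "(0::real) < 1" by simp
    fix d :: nat assume d: "1 \<le> d"
    have "real d ^ 2 \<le> real d ^ 3" using d by (intro power_increasing) auto
    then show "D_RD d \<le> ereal (1 * real d ^ 3)"
      unfolding D_RD_def using ub_inst
      by (intro SUP_least) (auto split: prod.splits intro: order_trans[OF ub_inst])
  qed
qed

end
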